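(* Let $S$ be a finite set, $T\ge1$, and let $p$ be the law of a Markov chain $(Y_1,\dots,Y_T)$ of order $m$ on $S^T$, where $1\le m\le T$. For integers $1\le a\le b\le T$ write $p(s_a^b):=\mathbf P(Y_a^b=s_a^b)$, and for every positive integer $k$ define $$\bar R_k(s^T):=-\frac1T\ln\prod_{j=1-k}^{T-1}p\big(s_{(j+1)\vee1}^{(j+k)\wedge T}\big),\qquad \bar R_\infty(s^T):=-\frac1T\ln p(s^T).$$ Then for every $s^T\in S^T$ and every integer $k\ge m$, $$\bar R_k(s^T)=\bar R_m(s^T)+(k-m)\bar R_\infty(s^T).$$
   Context: $s_a^b=(s_a,\dots,s_b)$; $\vee=\max$, $\wedge=\min$; $\ln0=-\infty$. A Markov chain of order $m$ is one in which the conditional law of $Y_t$ given $Y_1^{t-1}$ depends only on $Y_{t-m}^{t-1}$ (for $t>m$). *)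

theory Defs
  imports "HOL-Probability.Probability"
begin

text \<open>Sequences s^T in S^T are represented as functions nat => 's, of which only
the coordinates 1..T are relevant. The law p of (Y_1,...,Y_T) is a pmf on such functions.\<close>

definition win :: "(nat \<Rightarrow> 's) pmf \<Rightarrow> nat \<Rightarrow> nat \<Rightarrow> (nat \<Rightarrow> 's) \<Rightarrow> real" where
  "win p a b s = measure_pmf.prob p {y. \<forall>i\<in>{a..b}. y i = s i}"

text \<open>Markov chain of order m on S^T: for m < t <= T the conditional law of Y_t given
Y_1^{t-1} depends only on Y_{t-m}^{t-1} (conditional probabilities as ratios, on histories
of positive probability).\<close>
definition markov_order :: "(nat \<Rightarrow> 's) pmf \<Rightarrow> nat \<Rightarrow> nat \<Rightarrow> bool" where
  "markov_order p T m \<longleftrightarrow>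
     (\<forall>t\<in>{m<..T}. \<forall>x z. win p 1 (t - 1) x > 0 \<and> win p 1 (t - 1) z > 0 \<and>
        (\<forall>i\<in>{t - m..t - 1}. x i = z i) \<longrightarrow>
        (\<forall>v. win p 1 t (x(t := v)) / win p 1 (t - 1) x = win p 1 t (z(t := v)) / win p 1 (t - 1) z))"

definition eln :: "real \<Rightarrow> ereal" where
  "eln x = (if x > 0 then ereal (ln x) else -\<infinity>)"

definition Rbar :: "(nat \<Rightarrow> 's) pmf \<Rightarrow> nat \<Rightarrow> nat \<Rightarrow> (nat \<Rightarrow> 's) \<Rightarrow> ereal" where
  "Rbar p T k s = - (ereal (1 / real T) *
     eln (\<Prod>j\<in>{1 - int k..int T - 1}.
            win p (nat (max (j + 1) 1)) (nat (min (j + int k) (int T))) s))"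

definition Rbar_inf :: "(nat \<Rightarrow> 's) pmf \<Rightarrow> nat \<Rightarrow> (nat \<Rightarrow> 's) \<Rightarrow> ereal" where
  "Rbar_inf p T s = - (ereal (1 / real T) * eln (win p 1 T s))"

end

theory Submission
  imports Defs
begin


lemma fin_sp:
  assumes "set_pmf (p :: (nat \<Rightarrow> 's::finite) pmf) \<subseteq> extensional {1..T}"
  shows "finite (set_pmf p)"
proof -
  have "extensional {1..T} = (PiE {1..T} (\<lambda>_. UNIV :: 's set))"
    by (simp add: PiE_def)
  moreover have "finite (PiE {1..T} (\<lambda>_. UNIV :: 's set))"
    by (intro finite_PiE) auto
  ultimately show ?thesis using assms finite_subset by metis
qed

lemma win_sum:
  assumes "finite (set_pmf p)"
  shows "win p a b x = (\<Sum>y\<in>set_pmf p. if (\<forall>i\<in>{a..b}. y i = x i) then pmf p y else 0)"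
proof -
  have "win p a b x = measure_pmf.prob p ({y. \<forall>i\<in>{a..b}. y i = x i} \<inter> set_pmf p)"
    unfolding win_def by (simp add: measure_Int_set_pmf)
  also have "\<dots> = sum (pmf p) ({y. \<forall>i\<in>{a..b}. y i = x i} \<inter> set_pmf p)"
    using assms by (intro measure_measure_pmf_finite) auto
  also have "\<dots> = (\<Sum>y\<in>set_pmf p. if (\<forall>i\<in>{a..b}. y i = x i) then pmf p y else 0)"
  proof -
    have "{y. \<forall>i\<in>{a..b}. y i = x i} \<inter> set_pmf p = {y\<in>set_pmf p. \<forall>i\<in>{a..b}. y i = x i}" by auto
    then show ?thesis using assms by (simp add: sum.inter_filter)
  qed
  finally show ?thesis .
qed

lemma win_mono:
  assumes "{a..b} \<subseteq> {c..d}"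
  shows "win p c d x \<le> win p a b x"
  unfolding win_def using assms by (intro measure_pmf.finite_measure_mono) auto

lemma win_le1: "win p a b x \<le> 1"
  unfolding win_def by simp

lemma win_nonneg: "win p a b x \<ge> 0"
  unfolding win_def by simp

lemma win_empty: "win p 1 0 x = 1"
  unfolding win_def by simp

lemma tower:
  fixes w :: "'a \<Rightarrow> real"
  assumes fin: "finite A"
    and sym: "\<And>y y'. R y y' \<Longrightarrow> R y' y"
    and trans: "\<And>x y z. R x y \<Longrightarrow> R y z \<Longrightarrow> R x z"
    and Eresp: "\<And>y y'. R y y' \<Longrightarrow> E y = E y'"
    and pos: "\<And>y. y \<in> A \<Longrightarrow> (\<Sum>y'\<in>A. if R y' y then w y' else 0) > 0"
    and key: "\<And>y. y \<in> A \<Longrightarrow> E y \<Longrightarrow>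
       (\<Sum>y'\<in>A. if R y' y \<and> Q y' then w y' else 0) = c * (\<Sum>y'\<in>A. if R y' y then w y' else 0)"
  shows "(\<Sum>y\<in>A. if E y \<and> Q y then w y else 0) = c * (\<Sum>y\<in>A. if E y then w y else 0)"
proof -
  define W0 where "W0 y = (\<Sum>y'\<in>A. if R y' y then w y' else 0)" for y
  define v where "v y = w y / W0 y" for y
  have W0resp: "W0 y = W0 y'" if "R y' y" for y y'
  proof -
    have "R z y \<longleftrightarrow> R z y'" for z using trans[of z y y'] trans[of z y' y] sym[OF that] that by blast
    then show ?thesis unfolding W0_def by simp
  qed
  have wv: "w y = v y * W0 y" if "y \<in> A" for y
    using pos[OF that] unfolding v_def W0_def[symmetric] by simp
  have vsw: "v y * w y' = v y' * w y" if "R y' y" for y y'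
    unfolding v_def using W0resp[OF that] by simp
  have "(\<Sum>y\<in>A. if E y \<and> Q y then w y else 0) = (\<Sum>y\<in>A. if E y \<and> Q y then v y * W0 y else 0)"
    by (rule sum.cong[OF refl]) (simp add: wv)
  also have "\<dots> = (\<Sum>y\<in>A. \<Sum>y'\<in>A. if E y \<and> Q y \<and> R y' y then v y * w y' else 0)"
  proof (rule sum.cong[OF refl])
    fix y assume "y \<in> A"
    show "(if E y \<and> Q y then v y * W0 y else 0) = (\<Sum>y'\<in>A. if E y \<and> Q y \<and> R y' y then v y * w y' else 0)"
    proof (cases "E y \<and> Q y")
      case True
      have "v y * W0 y = (\<Sum>y'\<in>A. v y * (if R y' y then w y' else 0))"
        unfolding W0_def by (rule sum_distrib_left)
      also have "\<dots> = (\<Sum>y'\<in>A. if E y \<and> Q y \<and> R y' y then v y * w y' else 0)"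
        using True by (intro sum.cong) auto
      finally show ?thesis using True by simp
    next
      case False
      then have "(\<Sum>y'\<in>A. if E y \<and> Q y \<and> R y' y then v y * w y' else 0) = 0"
        by (intro sum.neutral) auto
      then show ?thesis by (subst if_not_P[OF False]) simp
    qed
  qed
  also have "\<dots> = (\<Sum>y'\<in>A. \<Sum>y\<in>A. if E y \<and> Q y \<and> R y' y then v y * w y' else 0)"
    by (rule sum.swap)
  also have "\<dots> = (\<Sum>y'\<in>A. \<Sum>y\<in>A. if E y' then v y' * (if R y y' \<and> Q y then w y else 0) else 0)"
  proof (intro sum.cong refl)
    fix y' y
    show "(if E y \<and> Q y \<and> R y' y then v y * w y' else 0) = (if E y' then v y' * (if R y y' \<and> Q y then w y else 0) else 0)"
    proof (cases "R y' y")
      case True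
      then show ?thesis using Eresp[OF True] vsw[OF True] sym[OF True] by auto
    next
      case False
      then have "\<not> R y y'" using sym by blast
      then show ?thesis using False by simp
    qed
  qed
  also have "\<dots> = (\<Sum>y'\<in>A. if E y' then v y' * (\<Sum>y\<in>A. if R y y' \<and> Q y then w y else 0) else 0)"
    by (intro sum.cong refl) (simp add: sum_distrib_left)
  also have "\<dots> = (\<Sum>y'\<in>A. if E y' then c * w y' else 0)"
  proof (intro sum.cong refl)
    fix y' assume y': "y' \<in> A"
    show "(if E y' then v y' * (\<Sum>y\<in>A. if R y y' \<and> Q y then w y else 0) else 0) = (if E y' then c * w y' else 0)"
      using key[OF y'] wv[OF y'] unfolding W0_def[symmetric] by simp
  qed
  also have "\<dots> = c * (\<Sum>y\<in>A. if E y then w y else 0)"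
    by (simp add: sum_distrib_left if_distrib cong: if_cong)
  finally show ?thesis .
qed

lemma K:
  fixes s :: "nat \<Rightarrow> 'a"
  assumes fin: "finite (set_pmf p)" and mk: "markov_order p T m"
    and a1: "1 \<le> a" and am: "a + m \<le> t" and tT: "t \<le> T"
    and pos0: "win p 1 (t - 1) s > 0"
  shows "win p a t s = win p a (t - 1) s * (win p 1 t s / win p 1 (t - 1) s)"
proof -
  define c where "c = win p 1 t s / win p 1 (t - 1) s"
  define R where "R y' y = (\<forall>i\<in>{1..t-1}. y' i = y i)" for y' y :: "nat \<Rightarrow> 'a"
  define E where "E y = (\<forall>i\<in>{a..t-1}. y i = s i)" for y
  define Q where "Q y = (y t = s t)" for y
  have t1: "t \<ge> 1" "m < t" using a1 am by auto
  have split: "(\<forall>i\<in>{a..t}. y i = s i) \<longleftrightarrow> E y \<and> Q y" for y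
  proof -
    have "{a..t} = insert t {a..t-1}" using a1 am t1 by auto
    then show ?thesis unfolding E_def Q_def by auto
  qed
  have W0: "win p 1 (t-1) y = (\<Sum>y'\<in>set_pmf p. if R y' y then pmf p y' else 0)" for y
    unfolding R_def by (subst win_sum[OF fin]) (auto intro!: sum.cong)
  have W1: "win p 1 t (y(t := s t)) = (\<Sum>y'\<in>set_pmf p. if R y' y \<and> Q y' then pmf p y' else 0)" for y
  proof -
    have "(\<forall>i\<in>{1..t}. y' i = (y(t := s t)) i) \<longleftrightarrow> R y' y \<and> Q y'" for y'
    proof -
      have "{1..t} = insert t {1..t-1}" using t1 by auto
      then show ?thesis unfolding R_def Q_def by auto
    qed
    then show ?thesis by (subst win_sum[OF fin]) (auto intro!: sum.cong)
  qed
  have posW: "(\<Sum>y'\<in>set_pmf p. if R y' y then pmf p y' else 0) > 0" if "y \<in> set_pmf p" for y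
  proof -
    have "pmf p y \<le> (\<Sum>y'\<in>set_pmf p. if R y' y then pmf p y' else 0)"
      using member_le_sum[of y "set_pmf p" "\<lambda>y'. if R y' y then pmf p y' else 0"] that fin
      by (auto simp: R_def)
    moreover have "pmf p y > 0" using that by (simp add: pmf_positive)
    ultimately show ?thesis by linarith
  qed
  have symR: "R y' y" if "R y y'" for y y' using that unfolding R_def by auto
  have transR: "R x z" if "R x y" "R y z" for x y z using that unfolding R_def by auto
  have ER: "E y = E y'" if "R y y'" for y y' using that a1 unfolding R_def E_def by auto
  have keyf: "(\<Sum>y'\<in>set_pmf p. if R y' y \<and> Q y' then pmf p y' else 0) = c * (\<Sum>y'\<in>set_pmf p. if R y' y then pmf p y' else 0)"
      if "y \<in> set_pmf p" "E y" for y
    proof -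
      have p1: "win p 1 (t-1) y > 0" using posW[OF that(1)] W0 by simp
      have agree: "\<forall>i\<in>{t - m..t - 1}. y i = s i" using that(2) am unfolding E_def by auto
      have "win p 1 t (y(t := s t)) / win p 1 (t - 1) y = win p 1 t (s(t := s t)) / win p 1 (t - 1) s"
      proof -
        have tin: "t \<in> {m<..T}" using t1 tT by auto
        have H: "\<forall>x z. win p 1 (t - 1) x > 0 \<and> win p 1 (t - 1) z > 0 \<and>
          (\<forall>i\<in>{t - m..t - 1}. x i = z i) \<longrightarrow>
          (\<forall>v. win p 1 t (x(t := v)) / win p 1 (t - 1) x = win p 1 t (z(t := v)) / win p 1 (t - 1) z)"
          using bspec[OF mk[unfolded markov_order_def] tin] .
        show ?thesis using H p1 pos0 agree by blast
      qed
      then have "win p 1 t (y(t := s t)) = c * win p 1 (t - 1) y"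
        using p1 unfolding c_def by (simp add: field_simps)
      then show ?thesis using W0 W1 by simp
    qed
  have "(\<Sum>y\<in>set_pmf p. if E y \<and> Q y then pmf p y else 0) = c * (\<Sum>y\<in>set_pmf p. if E y then pmf p y else 0)"
    by (rule tower[OF fin symR transR ER posW keyf])
  moreover have "win p a t s = (\<Sum>y\<in>set_pmf p. if E y \<and> Q y then pmf p y else 0)"
    by (subst win_sum[OF fin]) (simp add: split)
  moreover have "win p a (t-1) s = (\<Sum>y\<in>set_pmf p. if E y then pmf p y else 0)"
    by (subst win_sum[OF fin]) (simp add: E_def)
  ultimately show ?thesis unfolding c_def by (simp add: mult.commute)
qed

lemma Kc:
  assumes fin: "finite (set_pmf p)" and mk: "markov_order p T m"
    and t2: "2 \<le> t" and tT: "t \<le> T" and a: "a = 1 \<or> (1 \<le> a \<and> a + m \<le> t)"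
  shows "win p a t s * win p 1 (t - 1) s = win p a (t - 1) s * win p 1 t s"
proof (cases "a = 1")
  case True then show ?thesis by simp
next
  case False
  then have a1: "1 \<le> a" "a + m \<le> t" using a by auto
  show ?thesis
  proof (cases "win p 1 (t - 1) s = 0")
    case True
    have "win p 1 t s \<le> win p 1 (t - 1) s" by (rule win_mono) auto
    then have "win p 1 t s = 0" using True win_nonneg[of p 1 t s] by linarith
    then show ?thesis using True by simp
  next
    case False
    then have "win p 1 (t - 1) s > 0" using win_nonneg[of p 1 "t - 1" s] by linarith
    from K[OF fin mk a1 tT this] False show ?thesis by (simp add: field_simps)
  qed
qed

definition W :: "(nat \<Rightarrow> 's) pmf \<Rightarrow> nat \<Rightarrow> (nat \<Rightarrow> 's) \<Rightarrow> nat \<Rightarrow> int \<Rightarrow> real" where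
  "W p T s k j = win p (nat (max (j + 1) 1)) (nat (min (j + int k) (int T))) s"

lemma tele:
  fixes g :: "int \<Rightarrow> real"
  assumes "\<forall>j\<in>{a..a + int n}. g j \<noteq> 0"
  shows "(\<Prod>j\<in>{a..a + int n - 1}. g (j + 1) / g j) = g (a + int n) / g a"
  using assms
proof (induction n)
  case 0
  then show ?case by simp
next
  case (Suc n)
  have e: "{a..a + int (Suc n) - 1} = insert (a + int n) {a..a + int n - 1}" by auto
  have "(\<Prod>j\<in>{a..a + int (Suc n) - 1}. g (j + 1) / g j)
      = g (a + int n + 1) / g (a + int n) * (\<Prod>j\<in>{a..a + int n - 1}. g (j + 1) / g j)"
    unfolding e by (subst prod.insert) auto
  also have "\<dots> = g (a + int n + 1) / g (a + int n) * (g (a + int n) / g a)"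
    using Suc by simp
  also have "\<dots> = g (a + int (Suc n)) / g a"
    using Suc.prems by (simp add: field_simps)
  finally show ?case .
qed



lemma zero_case:
  assumes fin: "finite (set_pmf p)" and mk: "markov_order p T m"
    and T1: "1 \<le> T" and m1: "1 \<le> m" and km: "m < k" and z: "win p 1 T s = 0"
  shows "prod (W p T s k) {1 - int k..int T - 1} = 0"
proof -
  define t0 where "t0 = (LEAST t. win p 1 t s = 0)"
  have t0z: "win p 1 t0 s = 0" unfolding t0_def using z by (rule LeastI)
  have t0T: "t0 \<le> T" unfolding t0_def using z by (rule Least_le)
  have t00: "t0 \<noteq> 0"
  proof
    assume "t0 = 0" then show False using t0z win_empty[of p s] by simp
  qed
  show ?thesis
  proof (cases "t0 = 1")
    case True
    have "W p T s k (1 - int k) = 0" unfolding W_def using km m1 T1 t0z True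
      by (simp add: max_def min_def)
    moreover have "1 - int k \<in> {1 - int k..int T - 1}" using T1 km m1 by auto
    ultimately show ?thesis by (meson finite_atLeastAtMost_int prod_zero)
  next
    case False
    then have t2: "2 \<le> t0" using t00 by auto
    have nz: "win p 1 (t0 - 1) s \<noteq> 0"
      using not_less_Least[of "t0 - 1" "\<lambda>t. win p 1 t s = 0"] t00 unfolding t0_def[symmetric] by auto
    define a where "a = nat (max (int t0 - int k + 1) 1)"
    have ac: "a = 1 \<or> (1 \<le> a \<and> a + m \<le> t0)" unfolding a_def using km by auto
    have "win p a t0 s * win p 1 (t0 - 1) s = win p a (t0 - 1) s * win p 1 t0 s"
      by (rule Kc[OF fin mk t2 t0T ac])
    then have "win p a t0 s = 0" using nz t0z by simp
    moreover have "W p T s k (int t0 - int k) = win p a t0 s"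
      unfolding W_def a_def using t0T by (simp add: min_def)
    ultimately have "W p T s k (int t0 - int k) = 0" by simp
    moreover have "int t0 - int k \<in> {1 - int k..int T - 1}" using t0T t00 km by auto
    ultimately show ?thesis by (meson finite_atLeastAtMost_int prod_zero)
  qed
qed

lemma posw:
  assumes "win p 1 T s > 0" "1 \<le> a" "b \<le> T"
  shows "win p a b s > 0"
proof -
  have "win p 1 T s \<le> win p a b s" using assms by (intro win_mono) auto
  then show ?thesis using assms by linarith
qed

lemma pos_step:
  fixes s :: "nat \<Rightarrow> 'a"
  assumes fin: "finite (set_pmf p)" and mk: "markov_order p T m"
    and T1: "1 \<le> T" and m1: "1 \<le> m" and km: "m \<le> k" and P: "win p 1 T s > 0"
  shows "prod (W p T s (Suc k)) {1 - int (Suc k)..int T - 1} = prod (W p T s k) {1 - int k..int T - 1} * win p 1 T s"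
proof -
  define f where "f j = win p 1 (nat (j + int k)) s" for j
  define I1 where "I1 = {1 - int k..int T - int k - 1}"
  define I2 where "I2 = {int T - int k..int T - 1}"
  have spl: "{1 - int k..int T - 1} = I1 \<union> I2" "I1 \<inter> I2 = {}" unfolding I1_def I2_def using T1 by auto
  have e0: "{1 - int (Suc k)..int T - 1} = insert (- int k) {1 - int k..int T - 1}" using T1 by auto
  have w0: "W p T s (Suc k) (- int k) = win p 1 1 s" unfolding W_def using T1 by (simp add: max_def min_def)
  have w2: "W p T s (Suc k) j = W p T s k j" if "j \<in> I2" for j
  proof -
    have j: "int T - int k \<le> j" using that unfolding I2_def by simp
    have m1: "min (j + int (Suc k)) (int T) = int T" by (rule min_absorb2) (use j in linarith)
    have m2: "min (j + int k) (int T) = int T" by (rule min_absorb2) (use j in linarith)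
    show ?thesis unfolding W_def by (simp only: m1 m2)
  qed
  have w1: "W p T s (Suc k) j = W p T s k j * (f (j + 1) / f j)" if "j \<in> I1" for j
  proof -
    define t where "t = nat (j + int k + 1)"
    define a where "a = nat (max (j + 1) 1)"
    have jr: "1 - int k \<le> j" "j \<le> int T - int k - 1" using that unfolding I1_def by auto
    have t2: "2 \<le> t" "t \<le> T" unfolding t_def using jr by auto
    have ac: "a = 1 \<or> (1 \<le> a \<and> a + m \<le> t)" unfolding a_def t_def using km jr by auto
    have c: "win p a t s * win p 1 (t - 1) s = win p a (t - 1) s * win p 1 t s"
      by (rule Kc[OF fin mk t2 ac])
    have tm1: "t - 1 = nat (j + int k)" unfolding t_def using jr by auto
    have fj: "f j = win p 1 (t - 1) s" unfolding f_def tm1 ..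
    have fj1: "f (j + 1) = win p 1 t s" unfolding f_def t_def by (simp add: add.assoc add.commute add.left_commute)
    have W1: "W p T s (Suc k) j = win p a t s" unfolding W_def a_def t_def using jr by (simp add: min_def add.commute add.left_commute)
    have W2: "W p T s k j = win p a (t - 1) s" unfolding W_def a_def tm1 using jr by (simp add: min_def)
    have fpos: "f j > 0" unfolding fj using t2 by (intro posw[OF P]) auto
    show ?thesis unfolding W1 W2 fj1 using c fpos unfolding fj by (simp add: field_simps)
  qed
  have tel: "prod (\<lambda>j. f (j + 1) / f j) I1 = f (int T - int k) / f (1 - int k)"
  proof -
    have nz: "\<forall>j\<in>{(1 - int k)..(1 - int k) + int (T - 1)}. f j \<noteq> 0"
    proof
      fix j assume "j \<in> {(1 - int k)..(1 - int k) + int (T - 1)}"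
      then have "1 \<le> nat (j + int k)" "nat (j + int k) \<le> T" using T1 by auto
      then show "f j \<noteq> 0" unfolding f_def using posw[OF P] by force
    qed
    have "I1 = {(1 - int k)..(1 - int k) + int (T - 1) - 1}" unfolding I1_def using T1 by auto
    then have "prod (\<lambda>j. f (j + 1) / f j) I1 = f ((1 - int k) + int (T - 1)) / f (1 - int k)"
      using tele[OF nz] by simp
    also have "(1 - int k) + int (T - 1) = int T - int k" using T1 by auto
    finally show ?thesis .
  qed
  have f1: "f (int T - int k) = win p 1 T s" "f (1 - int k) = win p 1 1 s" unfolding f_def by auto
  have p11: "win p 1 1 s > 0" using posw[OF P] T1 by auto
  have "prod (W p T s (Suc k)) {1 - int (Suc k)..int T - 1}
      = win p 1 1 s * (prod (W p T s (Suc k)) I1 * prod (W p T s (Suc k)) I2)"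
    unfolding e0 w0[symmetric] spl(1) using T1 by (subst prod.insert) (auto simp: I1_def I2_def intro: prod.union_disjoint)
  also have "prod (W p T s (Suc k)) I1 = prod (W p T s k) I1 * prod (\<lambda>j. f (j + 1) / f j) I1"
  proof -
    have "prod (W p T s (Suc k)) I1 = prod (\<lambda>j. W p T s k j * (f (j + 1) / f j)) I1"
      by (rule prod.cong[OF refl]) (rule w1)
    also have "\<dots> = prod (W p T s k) I1 * prod (\<lambda>j. f (j + 1) / f j) I1"
      by (rule prod.distrib)
    finally show ?thesis .
  qed
  also have "prod (W p T s (Suc k)) I2 = prod (W p T s k) I2"
    by (rule prod.cong) (auto simp: w2)
  also have "prod (W p T s k) {1 - int k..int T - 1} = prod (W p T s k) I1 * prod (W p T s k) I2"
    unfolding spl(1) by (rule prod.union_disjoint) (auto simp: I1_def I2_def)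
  ultimately show ?thesis unfolding tel f1 using p11 by (simp add: field_simps)
qed

lemma Rbar_W: "Rbar p T k s = - (ereal (1 / real T) * eln (prod (W p T s k) {1 - int k..int T - 1}))"
  unfolding Rbar_def W_def ..

lemma prod_le1: "prod (W p T s k) A \<le> 1"
  by (rule prod_le_1) (auto simp: W_def win_nonneg win_le1)

theorem proposition7:
  fixes p :: "(nat \<Rightarrow> 's::finite) pmf" and T m k :: nat and s :: "nat \<Rightarrow> 's"
  assumes "T \<ge> 1" and "1 \<le> m" and "m \<le> T"
    and "set_pmf p \<subseteq> extensional {1..T}"
    and "markov_order p T m"
    and "k \<ge> m"
  shows "Rbar p T k s = Rbar p T m s + ereal (real (k - m)) * Rbar_inf p T s"
proof -
  have fin: "finite (set_pmf p)" using fin_sp[OF assms(4)] .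
  note mk = assms(5)
  have T1: "1 \<le> T" and m1: "1 \<le> m" using assms by auto
  have Tpos: "ereal (1 / real T) > 0" using T1 by simp
  show ?thesis
  proof (cases "k = m")
    case True
    then show ?thesis by (simp add: zero_ereal_def[symmetric])
  next
    case False
    then have km: "m < k" using assms(6) by simp
    show ?thesis
    proof (cases "win p 1 T s = 0")
      case True
      have z0: "prod (W p T s k) {1 - int k..int T - 1} = 0"
        by (rule zero_case[OF fin mk T1 m1 km True])
      have L: "Rbar p T k s = \<infinity>" unfolding Rbar_W z0 eln_def using Tpos by simp
      have I: "Rbar_inf p T s = \<infinity>" unfolding Rbar_inf_def using Tpos True by (simp add: eln_def)
      have nm: "Rbar p T m s \<noteq> -\<infinity>" unfolding Rbar_W eln_def by auto
      have "ereal (real (k - m)) * Rbar_inf p T s = \<infinity>" unfolding I using km by simp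
      then show ?thesis using L nm by simp
    next
      case False
      then have P: "win p 1 T s > 0" using win_nonneg[of p 1 T s] by linarith
      have ind: "prod (W p T s (m + d)) {1 - int (m + d)..int T - 1} = prod (W p T s m) {1 - int m..int T - 1} * win p 1 T s ^ d" for d
      proof (induction d)
        case 0 then show ?case by simp
      next
        case (Suc d)
        have "prod (W p T s (Suc (m + d))) {1 - int (Suc (m + d))..int T - 1}
            = prod (W p T s (m + d)) {1 - int (m + d)..int T - 1} * win p 1 T s"
          by (rule pos_step[OF fin mk T1 m1 _ P]) simp
        then show ?case using Suc by simp
      qed
      define d where "d = k - m"
      have kd: "k = m + d" unfolding d_def using km by simp
      define Pm where "Pm = prod (W p T s m) {1 - int m..int T - 1}"
      have Pmpos: "Pm > 0" unfolding Pm_def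
        by (rule prod_pos) (auto simp: W_def intro!: posw[OF P])
      have "Rbar p T k s = - (ereal (1 / real T) * ereal (ln Pm + real d * ln (win p 1 T s)))"
        unfolding Rbar_W kd ind Pm_def[symmetric] using Pmpos P by (simp add: eln_def ln_mult ln_realpow)
      moreover have "Rbar p T m s = - (ereal (1 / real T) * ereal (ln Pm))"
        unfolding Rbar_W Pm_def[symmetric] using Pmpos by (simp add: eln_def)
      moreover have "Rbar_inf p T s = - (ereal (1 / real T) * ereal (ln (win p 1 T s)))"
        unfolding Rbar_inf_def using P by (simp add: eln_def)
      ultimately show ?thesis unfolding d_def[symmetric] by (simp add: algebra_simps)
    qed
  qed
qed

end
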